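(* Let $(\mathcal{G}(u_0,v_0),-\Omega^2\,du\,dv)$ with radial function $r$ and stress-energy components $T_{uu},T_{uv},T_{vv}$ be as described in the context, satisfying assumptions (I)–(VII), and suppose there is $\delta>0$ such that, with $\mathcal{W}=\mathcal{W}(\delta)$, condition (A), $T_{uv}\Omega^{-2}<\frac1{4r^2}$, holds on $\mathcal{A}\cap\mathcal{W}$. If $\mathcal{A}\cap\mathcal{W}=\emptyset$, then $\mathcal{W}\cap\mathcal{R}$ contains a rectangle $K(u_1,v_1)=[0,u_1]\times[v_1,\infty)$ for some $u_1\in(0,u_0]$, $v_1\in[v_0,\infty)$.
   Context: Fix double null coordinates $(u,v)$ on $\mathbb{R}^2$ with Minkowski metric $-du\,dv$, time-oriented so that $u,v$ increase toward the future. For $u,v>0$, $K(u,v)=[0,u]\times[v,\infty)$. Fix $u_0,v_0>0$, $\mathcal{C}_{in}=[0,u_0]\times\{v_0\}$, $\mathcal{C}_{out}=\{0\}\times[v_0,\infty)$; causal notions refer to $K(u_0,v_0)$. Let $\mathcal{G}(u_0,v_0)\subset K(u_0,v_0)$ be globally hyperbolic, relatively open, containing $\mathcal{C}_{in}\cup\mathcal{C}_{out}$, with metric $-\Omega^2du\,dv$ ($\Omega>0$ smooth), smooth $r\ge0$ with $r>0$ on $\mathcal{C}_{in}\cup\mathcal{C}_{out}$, and smooth $T_{uu},T_{uv},T_{vv}$ (stress-energy components of the spherically symmetric spacetime $-\Omega^2du\,dv+r^2g_{S^2}$) satisfying $\partial_u(\Omega^{-2}\partial_u r)=-r\Omega^{-2}T_{uu}$,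 $\partial_v(\Omega^{-2}\partial_v r)=-r\Omega^{-2}T_{vv}$, $\partial_u m=2r^2\Omega^{-2}(T_{uv}\partial_u r-T_{uu}\partial_v r)$, $\partial_v m=2r^2\Omega^{-2}(T_{uv}\partial_v r-T_{vv}\partial_u r)$, with $m=\frac r2(1+4\Omega^{-2}\partial_u r\partial_v r)$. Define $\mathcal{R}=\{\partial_v r>0,\partial_u r<0\}$, $\mathcal{T}=\{\partial_v r<0,\partial_u r<0\}$, $\mathcal{A}=\{\partial_v r=0,\partial_u r<0\}$, $r_+=\sup_{\mathcal{C}_{out}}r$, $m_+=\sup_{\mathcal{C}_{out}}m$, $\mathcal{W}(\delta)=\{(u,v)\in\mathcal{G}(u_0,v_0):r\ge r_+-\delta\}$. Assumptions: (I) $T_{uu},T_{uv},T_{vv}\ge0$; (II) $J^-(\mathcal{G}(u_0,v_0))\subset\mathcal{G}(u_0,v_0)$; (III) $r\le r_+<\infty$ on $\mathcal{C}_{out}$; (IV) $0\le m\le m_+<\infty$ on $\mathcal{C}_{out}$; (V) $\partial_u r<0$ on $\mathcal{C}_{out}$; (VI) $\partial_v r>0$ on $\mathcal{C}_{out}$; (VII) (closures in $K(u_0,v_0)$) if $p\in\overline{\mathcal{R}}$, $q\in\overline{\mathcal{R}}\cap I^-(p)$, $J^-(p)\cap J^+(q)\setminus\{p\}\subset\mathcal{R}\cup\mathcal{A}$, then $p\in\mathcal{R}\cup\mathcal{A}$. *)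

theory Defs
  imports "HOL-Analysis.Analysis"
begin

text \<open>Points of R^2 in double null coordinates are pairs (u,v).\<close>

definition pu :: "(real \<times> real \<Rightarrow> real) \<Rightarrow> real \<times> real \<Rightarrow> real" where
  "pu f p = deriv (\<lambda>s. f (s, snd p)) (fst p)"

definition pv :: "(real \<times> real \<Rightarrow> real) \<Rightarrow> real \<times> real \<Rightarrow> real" where
  "pv f p = deriv (\<lambda>s. f (fst p, s)) (snd p)"

fun Ck_on :: "nat \<Rightarrow> (real \<times> real) set \<Rightarrow> (real \<times> real \<Rightarrow> real) \<Rightarrow> bool" where
  "Ck_on 0 U f = continuous_on U f"
| "Ck_on (Suc k) U f = ((\<forall>x\<in>U. f differentiable (at x)) \<and> Ck_on k U (pu f) \<and> Ck_on k U (pv f))"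

definition smooth_on :: "(real \<times> real) set \<Rightarrow> (real \<times> real \<Rightarrow> real) \<Rightarrow> bool" where
  "smooth_on S f = (\<exists>U. open U \<and> S \<subseteq> U \<and> (\<forall>k. Ck_on k U f))"

definition Krect :: "real \<Rightarrow> real \<Rightarrow> (real \<times> real) set" where
  "Krect u v = {p. 0 \<le> fst p \<and> fst p \<le> u \<and> v \<le> snd p}"

text \<open>Causal relations of Minkowski space -du dv, time-oriented by increasing u, v,
  restricted to the ambient region K.\<close>
definition causal_le :: "real \<times> real \<Rightarrow> real \<times> real \<Rightarrow> bool" where
  "causal_le q p = (fst q \<le> fst p \<and> snd q \<le> snd p)"

definition chron_lt :: "real \<times> real \<Rightarrow> real \<times> real \<Rightarrow> bool" where
  "chron_lt q p = (fst q < fst p \<and> snd q < snd p)"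

definition Jminus :: "(real \<times> real) set \<Rightarrow> (real \<times> real) set \<Rightarrow> (real \<times> real) set" where
  "Jminus K S = {q\<in>K. \<exists>p\<in>S. causal_le q p}"

definition Jplus :: "(real \<times> real) set \<Rightarrow> (real \<times> real) set \<Rightarrow> (real \<times> real) set" where
  "Jplus K S = {q\<in>K. \<exists>p\<in>S. causal_le p q}"

definition Iminus :: "(real \<times> real) set \<Rightarrow> (real \<times> real) set \<Rightarrow> (real \<times> real) set" where
  "Iminus K S = {q\<in>K. \<exists>p\<in>S. chron_lt q p}"

definition causal_curve_in :: "(real \<times> real) set \<Rightarrow> (real \<Rightarrow> real \<times> real) \<Rightarrow> bool" where
  "causal_curve_in G \<gamma> = (continuous_on {0..1} \<gamma> \<and> \<gamma> ` {0..1} \<subseteq> G \<and>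
     (\<forall>s t. 0 \<le> s \<longrightarrow> s \<le> t \<longrightarrow> t \<le> 1 \<longrightarrow> causal_le (\<gamma> s) (\<gamma> t)))"

definition causally_precedes_in :: "(real \<times> real) set \<Rightarrow> real \<times> real \<Rightarrow> real \<times> real \<Rightarrow> bool" where
  "causally_precedes_in G p q = (\<exists>\<gamma>. causal_curve_in G \<gamma> \<and> \<gamma> 0 = p \<and> \<gamma> 1 = q)"

text \<open>Global hyperbolicity of G (with a metric conformal to -du dv; causality is automatic
  in 1+1 double null coordinates): all causal diamonds of G are compact.\<close>
definition globally_hyperbolic :: "(real \<times> real) set \<Rightarrow> bool" where
  "globally_hyperbolic G = (\<forall>p\<in>G. \<forall>q\<in>G.
      compact {x. causally_precedes_in G p x \<and> causally_precedes_in G x q})"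

definition rel_open_in :: "(real \<times> real) set \<Rightarrow> (real \<times> real) set \<Rightarrow> bool" where
  "rel_open_in K G = openin (top_of_set K) G"

definition hawking_mass :: "(real \<times> real \<Rightarrow> real) \<Rightarrow> (real \<times> real \<Rightarrow> real) \<Rightarrow> real \<times> real \<Rightarrow> real" where
  "hawking_mass \<Omega> r p = r p / 2 * (1 + 4 * (\<Omega> p) powi (-2) * pu r p * pv r p)"


definition Cin :: "real \<Rightarrow> real \<Rightarrow> (real \<times> real) set" where
  "Cin u0 v0 = {p. 0 \<le> fst p \<and> fst p \<le> u0 \<and> snd p = v0}"

definition Cout :: "real \<Rightarrow> (real \<times> real) set" where
  "Cout v0 = {p. fst p = 0 \<and> v0 \<le> snd p}"

definition Rreg :: "(real \<times> real) set \<Rightarrow> (real \<times> real \<Rightarrow> real) \<Rightarrow> (real \<times> real) set" where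
  "Rreg G r = {p\<in>G. pv r p > 0 \<and> pu r p < 0}"

definition Treg :: "(real \<times> real) set \<Rightarrow> (real \<times> real \<Rightarrow> real) \<Rightarrow> (real \<times> real) set" where
  "Treg G r = {p\<in>G. pv r p < 0 \<and> pu r p < 0}"

definition Areg :: "(real \<times> real) set \<Rightarrow> (real \<times> real \<Rightarrow> real) \<Rightarrow> (real \<times> real) set" where
  "Areg G r = {p\<in>G. pv r p = 0 \<and> pu r p < 0}"

definition r_plus :: "real \<Rightarrow> (real \<times> real \<Rightarrow> real) \<Rightarrow> real" where
  "r_plus v0 r = Sup (r ` Cout v0)"

definition m_plus :: "real \<Rightarrow> (real \<times> real \<Rightarrow> real) \<Rightarrow> (real \<times> real \<Rightarrow> real) \<Rightarrow> real" where
  "m_plus v0 \<Omega> r = Sup (hawking_mass \<Omega> r ` Cout v0)"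

definition Wreg :: "(real \<times> real) set \<Rightarrow> real \<Rightarrow> (real \<times> real \<Rightarrow> real) \<Rightarrow> real \<Rightarrow> (real \<times> real) set" where
  "Wreg G v0 r \<delta> = {p\<in>G. r p \<ge> r_plus v0 r - \<delta>}"

end

theory Submission
  imports Defs
begin

lemma smooth_facts:
  assumes "smooth_on G f"
  shows "\<exists>U. open U \<and> G \<subseteq> U \<and> (\<forall>x\<in>U. f differentiable (at x)) \<and> continuous_on U f
     \<and> continuous_on U (pv f) \<and> (\<forall>x\<in>U. pu f differentiable (at x))"
proof -
  obtain U where U: "open U" "G \<subseteq> U" "\<forall>k. Ck_on k U f" using assms unfolding smooth_on_def by blast
  have 1: "Ck_on (Suc 0) U f" using U by blast
  have 2: "Ck_on (Suc (Suc 0)) U f" using U by blast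
  have 0: "Ck_on 0 U f" using U by blast
  have a: "\<forall>x\<in>U. f differentiable (at x)" "continuous_on U (pv f)" using 1 by simp_all
  have b: "\<forall>x\<in>U. pu f differentiable (at x)" using 2 by simp
  have c: "continuous_on U f" using 0 by simp
  show ?thesis using U a b c by blast
qed

lemma deriv_v:
  assumes "f differentiable (at (a,t))"
  shows "((\<lambda>s. f (a,s)) has_real_derivative pv f (a,t)) (at t)"
proof -
  have "(\<lambda>s::real. (a,s)) differentiable (at t)" by (auto intro!: derivative_intros)
  then have "(\<lambda>s. f (a,s)) differentiable (at t)"
    using differentiable_chain_at[of "\<lambda>s. (a,s)" t f] assms by (simp add: o_def)
  then show ?thesis unfolding pv_def by (simp add: DERIV_deriv_iff_real_differentiable)
qed

lemma deriv_u:
  assumes "f differentiable (at (t,b))"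
  shows "((\<lambda>s. f (s,b)) has_real_derivative pu f (t,b)) (at t)"
proof -
  have "(\<lambda>s::real. (s,b)) differentiable (at t)" by (auto intro!: derivative_intros)
  then have "(\<lambda>s. f (s,b)) differentiable (at t)"
    using differentiable_chain_at[of "\<lambda>s. (s,b)" t f] assms by (simp add: o_def)
  then show ?thesis unfolding pu_def by (simp add: DERIV_deriv_iff_real_differentiable)
qed

lemma first_zero:
  fixes k f :: "real \<Rightarrow> real"
  assumes cd: "c \<le> d" and kc: "continuous_on {c..d} k"
    and fd: "\<And>t. t \<in> {c..d} \<Longrightarrow> (f has_real_derivative k t) (at t)"
    and k0: "k c > 0" and f0: "f c > L"
    and nz: "\<And>t. t \<in> {c..d} \<Longrightarrow> k t = 0 \<Longrightarrow> f t > L \<Longrightarrow> False"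
  shows "k d > 0 \<and> f d > L"
proof -
  have pos: "\<forall>t\<in>{c..d}. k t > 0"
  proof (rule ccontr)
    assume nt: "\<not> (\<forall>t\<in>{c..d}. k t > 0)"
    define Z where "Z = {c..d} \<inter> k -` {..0}"
    have "Z \<noteq> {}" using nt unfolding Z_def by force
    moreover have "closed Z" unfolding Z_def by (rule continuous_closed_preimage[OF kc]) auto
    moreover have "bounded Z" unfolding Z_def by (rule bounded_Int) auto
    ultimately have "compact Z" "Z \<noteq> {}" using compact_eq_bounded_closed by blast+
    then obtain ts where ts: "ts \<in> Z" "\<forall>t\<in>Z. ts \<le> t" using compact_attains_inf by blast
    have ts1: "c \<le> ts" "ts \<le> d" "k ts \<le> 0" using ts unfolding Z_def by auto
    have "c < ts" using ts1 k0 by (metis order.order_iff_strict not_le)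
    have "continuous_on {c..ts} k" using kc ts1 by (auto intro: continuous_on_subset)
    then obtain t' where t': "c \<le> t'" "t' \<le> ts" "k t' = 0"
      using IVT2'[of k ts 0 c] ts1 k0 by auto
    then have "t' \<in> Z" using ts1 unfolding Z_def by auto
    then have "t' = ts" using ts t' by force
    obtain z where z: "c < z" "z < ts" "f ts - f c = (ts - c) * k z"
      using MVT2[of c ts f k] \<open>c < ts\<close> fd ts1 by auto
    have "z \<notin> Z" using ts z by force
    then have "k z > 0" using z ts1 unfolding Z_def by auto
    then have "f ts > L" using z f0 \<open>c < ts\<close> by (smt (verit) mult_pos_pos)
    then show False using nz[of ts] ts1 t' \<open>t' = ts\<close> by auto
  qed
  have "f d \<ge> f c"
  proof (cases "c = d")
    case False
    then obtain z where z: "c < z" "z < d" "f d - f c = (d - c) * k z"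
      using MVT2[of c d f k] cd fd by auto
    then show ?thesis using pos by (smt (verit) atLeastAtMost_iff mult_pos_pos)
  qed simp
  then show ?thesis using pos cd f0 by auto
qed

theorem lemma2:
  fixes u0 v0 \<delta> :: real
    and G :: "(real \<times> real) set"
    and \<Omega> r Tuu Tuv Tvv :: "real \<times> real \<Rightarrow> real"
  assumes u0: "u0 > 0" and v0: "v0 > 0"
    and GK: "G \<subseteq> Krect u0 v0" and Gopen: "rel_open_in (Krect u0 v0) G"
    and Ghyp: "globally_hyperbolic G"
    and GC: "Cin u0 v0 \<union> Cout v0 \<subseteq> G"
    and smooth: "smooth_on G \<Omega>" "smooth_on G r" "smooth_on G Tuu" "smooth_on G Tuv" "smooth_on G Tvv"
    and \<Omega>pos: "\<forall>p\<in>G. \<Omega> p > 0"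
    and rnn: "\<forall>p\<in>G. r p \<ge> 0"
    and rpos: "\<forall>p\<in>Cin u0 v0 \<union> Cout v0. r p > 0"
    and Ray_u: "\<forall>p\<in>G. pu (\<lambda>q. (\<Omega> q) powi (-2) * pu r q) p = - r p * (\<Omega> p) powi (-2) * Tuu p"
    and Ray_v: "\<forall>p\<in>G. pv (\<lambda>q. (\<Omega> q) powi (-2) * pv r q) p = - r p * (\<Omega> p) powi (-2) * Tvv p"
    and mu: "\<forall>p\<in>G. pu (hawking_mass \<Omega> r) p
               = 2 * (r p)\<^sup>2 * (\<Omega> p) powi (-2) * (Tuv p * pu r p - Tuu p * pv r p)"
    and mv: "\<forall>p\<in>G. pv (hawking_mass \<Omega> r) p
               = 2 * (r p)\<^sup>2 * (\<Omega> p) powi (-2) * (Tuv p * pv r p - Tvv p * pu r p)"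
    and I: "\<forall>p\<in>G. Tuu p \<ge> 0 \<and> Tuv p \<ge> 0 \<and> Tvv p \<ge> 0"
    and II: "Jminus (Krect u0 v0) G \<subseteq> G"
    and III: "bdd_above (r ` Cout v0)" "\<forall>p\<in>Cout v0. r p \<le> r_plus v0 r"
    and IV: "bdd_above (hawking_mass \<Omega> r ` Cout v0)"
            "\<forall>p\<in>Cout v0. 0 \<le> hawking_mass \<Omega> r p \<and> hawking_mass \<Omega> r p \<le> m_plus v0 \<Omega> r"
    and V: "\<forall>p\<in>Cout v0. pu r p < 0"
    and VI: "\<forall>p\<in>Cout v0. pv r p > 0"
    and VII: "\<forall>p q. p \<in> closure (Rreg G r) \<inter> Krect u0 v0 \<longrightarrow>
                 q \<in> closure (Rreg G r) \<inter> Krect u0 v0 \<inter> Iminus (Krect u0 v0) {p} \<longrightarrow>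
                 (Jminus (Krect u0 v0) {p} \<inter> Jplus (Krect u0 v0) {q}) - {p} \<subseteq> Rreg G r \<union> Areg G r \<longrightarrow>
                 p \<in> Rreg G r \<union> Areg G r"
    and \<delta>: "\<delta> > 0"
    and condA: "\<forall>p\<in>Areg G r \<inter> Wreg G v0 r \<delta>. Tuv p * (\<Omega> p) powi (-2) < 1 / (4 * (r p)\<^sup>2)"
    and noA: "Areg G r \<inter> Wreg G v0 r \<delta> = {}"
  shows "\<exists>u1 v1. 0 < u1 \<and> u1 \<le> u0 \<and> v0 \<le> v1 \<and>
           Krect u1 v1 \<subseteq> Wreg G v0 r \<delta> \<inter> Rreg G r"
proof -
  define K where "K = Krect u0 v0"
  have past: "\<And>x y. x \<in> K \<Longrightarrow> y \<in> G \<Longrightarrow> causal_le x y \<Longrightarrow> x \<in> G"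
    using II unfolding Jminus_def K_def by blast
  obtain Ur where Ur: "open Ur" "G \<subseteq> Ur" "\<forall>x\<in>Ur. r differentiable (at x)" "continuous_on Ur r"
     "continuous_on Ur (pv r)" "\<forall>x\<in>Ur. pu r differentiable (at x)"
    using smooth_facts[OF smooth(2)] by blast
  obtain UO where UO: "G \<subseteq> UO" "\<forall>x\<in>UO. \<Omega> differentiable (at x)"
    using smooth_facts[OF smooth(1)] by blast
  obtain Og where Og: "open Og" "G = K \<inter> Og" using Gopen unfolding rel_open_in_def openin_open K_def by blast
  have GK': "\<And>a b. (a,b) \<in> G \<Longrightarrow> 0 \<le> a \<and> a \<le> u0 \<and> v0 \<le> b" using GK unfolding Krect_def by auto
  have inK: "\<And>a b. 0 \<le> a \<Longrightarrow> a \<le> u0 \<Longrightarrow> v0 \<le> b \<Longrightarrow> (a,b) \<in> K" unfolding K_def Krect_def by auto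
  have Cout_in: "\<And>b. v0 \<le> b \<Longrightarrow> (0,b) \<in> Cout v0" unfolding Cout_def by auto
  have CoutG: "\<And>b. v0 \<le> b \<Longrightarrow> (0,b) \<in> G" using GC Cout_in by blast
  have Opos: "\<And>p. p \<in> G \<Longrightarrow> (\<Omega> p) powi (-2) > 0" using \<Omega>pos by auto
  have puneg: "pu r x < 0" if xG: "x \<in> G" for x
  proof -
    obtain a b where x: "x = (a,b)" by (cases x)
    have ab: "0 \<le> a" "a \<le> u0" "v0 \<le> b" using GK' xG x by auto
    have segG: "(s,b) \<in> G" if "0 \<le> s" "s \<le> a" for s
      using past[of "(s,b)" x] inK[of s b] ab that xG x unfolding causal_le_def by auto
    define F where "F = (\<lambda>q. (\<Omega> q) powi (-2) * pu r q)"
    have "(\<lambda>s. F (s,b)) 0 \<ge> (\<lambda>s. F (s,b)) a"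
    proof (rule DERIV_nonpos_imp_nonincreasing[OF ab(1)])
      fix s assume s: "0 \<le> s" "s \<le> a"
      have sG: "(s,b) \<in> G" using segG s by auto
      have "F differentiable (at (s,b))" unfolding F_def
        using sG UO Ur \<Omega>pos by (intro differentiable_mult differentiable_power_int) auto
      then have "((\<lambda>s. F (s,b)) has_real_derivative pu F (s,b)) (at s)" by (rule deriv_u)
      moreover have "pu F (s,b) \<le> 0" using Ray_u sG I Opos[OF sG] rnn unfolding F_def
        by (auto intro!: mult_nonneg_nonneg)
      ultimately show "\<exists>y. ((\<lambda>s. F (s,b)) has_real_derivative y) (at s) \<and> y \<le> 0" by blast
    qed
    moreover have "F (0,b) < 0" unfolding F_def using V Cout_in[OF ab(3)] Opos[OF CoutG[OF ab(3)]]
      by (auto intro!: mult_pos_neg)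
    ultimately have "F (a,b) < 0" by simp
    then show ?thesis unfolding F_def x using Opos[OF xG[unfolded x]]
      by (metis mult_nonneg_nonneg not_le less_imp_le)
  qed
  define rp where "rp = r_plus v0 r"
  obtain v1 where v1: "v0 \<le> v1" "r (0,v1) > rp - \<delta>"
  proof -
    have ne: "r ` Cout v0 \<noteq> {}" using Cout_in[of v0] by blast
    have lt: "rp - \<delta> < Sup (r ` Cout v0)" using \<delta> unfolding rp_def r_plus_def by linarith
    obtain z where z: "z \<in> r ` Cout v0" "rp - \<delta> < z" using less_cSupD[OF ne lt] by blast
    then obtain y where "y \<in> Cout v0" "rp - \<delta> < r y" by blast
    then obtain b where "v0 \<le> b" "rp - \<delta> < r (0,b)" unfolding Cout_def by (cases y) auto
    then show ?thesis using that by blast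
  qed
  have v1G: "(0,v1) \<in> G" using CoutG[OF v1(1)] .
  define Q where "Q = Og \<inter> (Ur \<inter> r -` {rp - \<delta><..})"
  have oQ: "open Q"
  proof -
    have "open (r -` {rp - \<delta><..} \<inter> Ur)"
      using continuous_on_open_vimage[OF Ur(1), THEN iffD1, OF Ur(4), rule_format, OF open_greaterThan] .
    then show ?thesis using Og(1) by (simp add: Q_def Int_commute open_Int)
  qed
  have mQ: "(0,v1) \<in> Q" unfolding Q_def using v1G Og(2) Ur(2) v1(2) by blast
  obtain e where e: "e > 0" "ball (0,v1) e \<subseteq> Q"
    using open_contains_ball_eq[OF oQ, of "(0,v1)"] mQ by metis
  define u1 where "u1 = min u0 (e/2)"
  have u1: "0 < u1" "u1 \<le> u0" unfolding u1_def using u0 e by auto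
  have line1: "(s,v1) \<in> G \<and> r (s,v1) > rp - \<delta>" if "0 \<le> s" "s \<le> u1" for s
  proof -
    have "dist (0,v1) (s,v1) < e" using that u1_def e by (simp add: dist_Pair_Pair)
    then have "(s,v1) \<in> Q" using e by auto
    then have "(s,v1) \<in> Og" "r (s,v1) > rp - \<delta>" unfolding Q_def by auto
    moreover have "(s,v1) \<in> K" using inK that u1 v1 by auto
    ultimately show ?thesis using Og(2) by blast
  qed
  have noAW: False if "p \<in> G" "pv r p = 0" "r p > rp - \<delta>" for p
  proof -
    have "p \<in> Areg G r \<inter> Wreg G v0 r \<delta>" using that puneg[OF that(1)]
      unfolding Areg_def Wreg_def rp_def by auto
    then show False using noA by blast
  qed
  have key: "pv r (a,b) > 0 \<and> r (a,b) > rp - \<delta>" if abG: "(a,b) \<in> G" "a \<le> u1" "v1 \<le> b" for a b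
  proof -
    have a0: "0 \<le> a" using GK' abG by auto
    have segG: "(a,t) \<in> G" if "v1 \<le> t" "t \<le> b" for t
      using past[of "(a,t)" "(a,b)"] inK[of a t] a0 abG u1 v1 that GK'[OF abG(1)] unfolding causal_le_def by auto
    have av1: "(a,v1) \<in> G" using segG abG by auto
    have s1: "pv r (a,v1) > 0"
    proof (rule ccontr)
      assume "\<not> pv r (a,v1) > 0"
      moreover have "continuous_on {0..a} (\<lambda>s. pv r (s,v1))"
        using line1 abG Ur by (intro continuous_on_compose2[OF Ur(5)]) (auto intro!: continuous_intros)
      moreover have "pv r (0,v1) > 0" using VI Cout_in v1 by auto
      ultimately obtain s where "0 \<le> s" "s \<le> a" "pv r (s,v1) = 0"
        using IVT2'[of "\<lambda>s. pv r (s,v1)" a 0 0] a0 by auto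
      then show False using noAW line1[of s] abG by auto
    qed
    have "pv r (a,b) > 0 \<and> (\<lambda>t. r (a,t)) b > rp - \<delta>"
    proof (rule first_zero[of v1 b "\<lambda>t. pv r (a,t)"])
      show "v1 \<le> b" by fact
      show "continuous_on {v1..b} (\<lambda>t. pv r (a, t))"
        using segG Ur by (intro continuous_on_compose2[OF Ur(5)]) (auto intro!: continuous_intros)
      show "((\<lambda>t. r (a,t)) has_real_derivative pv r (a,t)) (at t)" if "t \<in> {v1..b}" for t
        using segG that Ur by (intro deriv_v) auto
      show "pv r (a,v1) > 0" by fact
      show "(\<lambda>t. r (a,t)) v1 > rp - \<delta>" using line1 a0 abG by auto
      show False if "t \<in> {v1..b}" "pv r (a,t) = 0" "(\<lambda>t. r (a,t)) t > rp - \<delta>" for t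
        using noAW[of "(a,t)"] segG that by auto
    qed
    then show ?thesis by simp
  qed
  have rect: "Krect u1 v1 \<subseteq> G"
  proof (rule ccontr)
    assume "\<not> Krect u1 v1 \<subseteq> G"
    then obtain x0 where x0: "x0 \<in> Krect u1 v1" "x0 \<notin> G" by blast
    define c where "c = fst x0 + snd x0"
    define S where "S = ({0..u1} \<times> {v1..c}) \<inter> (Krect u1 v1 \<inter> - Og) \<inter> {x. fst x + snd x \<le> c}"
    have KK: "Krect u1 v1 \<subseteq> K" unfolding Krect_def K_def using u1 v1 by auto
    have clK: "closed (Krect u1 v1)" unfolding Krect_def
      by (intro closed_Collect_conj closed_Collect_le continuous_intros)
    have "compact S" unfolding S_def
      by (intro compact_Int_closed compact_Times compact_Icc closed_Int clK closed_Compl Og(1) closed_Collect_le continuous_intros)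
    moreover have "x0 \<in> S"
    proof -
      have "x0 \<in> K" using x0(1) KK by blast
      then have "x0 \<notin> Og" using x0(2) Og(2) by blast
      then show ?thesis using x0(1) unfolding S_def c_def Krect_def by (cases x0) auto
    qed
    ultimately obtain p where pS: "p \<in> S" and pmin: "\<forall>y\<in>S. fst p + snd p \<le> fst y + snd y"
    proof -
      have "continuous_on S (\<lambda>x. fst x + snd x)" by (intro continuous_intros)
      then show ?thesis using continuous_attains_inf[of S "\<lambda>x. fst x + snd x"] that \<open>compact S\<close> \<open>x0 \<in> S\<close> by blast
    qed
    have pK: "p \<in> Krect u1 v1" "p \<notin> G" using pS Og KK unfolding S_def by auto
    have below: "x \<in> G" if "x \<in> Krect u1 v1" "causal_le x p" "x \<noteq> p" for x
    proof (rule ccontr)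
      assume "x \<notin> G"
      moreover have "x \<in> K" using that(1) KK by blast
      ultimately have xO: "x \<notin> Og" using Og(2) by blast
      have "x \<in> S" using that pS xO unfolding S_def Krect_def causal_le_def
        by (cases x, cases p) (auto simp: mem_Times_iff)
      then have "fst p + snd p \<le> fst x + snd x" using pmin by auto
      then have "x = p" using that(2) unfolding causal_le_def by (simp add: prod_eq_iff)
      then show False using that by auto
    qed
    obtain pa pb where p: "p = (pa,pb)" by (cases p)
    have pab: "0 \<le> pa" "pa \<le> u1" "v1 \<le> pb" using pK p unfolding Krect_def by auto
    have pa0: "pa > 0"
    proof (rule ccontr)
      assume "\<not> pa > 0" then have "pa = 0" using pab by auto
      then show False using CoutG[of pb] pK p pab v1 by auto
    qed
    have pbv1: "pb > v1"
    proof (rule ccontr)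
      assume "\<not> pb > v1" then have "pb = v1" using pab by auto
      then have "p \<in> G" using past[of p "(u1,v1)"] line1[of u1] u1 KK pK p pab unfolding causal_le_def by auto
      then show False using pK by auto
    qed
    have inR: "x \<in> Rreg G r" if "x \<in> Krect u1 v1" "causal_le x p" "x \<noteq> p" for x
    proof -
      obtain a b where x: "x = (a,b)" by (cases x)
      have xG: "x \<in> G" using below that by auto
      then show ?thesis using key[of a b] puneg[OF xG] x that unfolding Krect_def Rreg_def by auto
    qed
    define q where "q = (pa/2, v1)"
    have qK: "q \<in> Krect u1 v1" "causal_le q p" "q \<noteq> p" unfolding q_def Krect_def causal_le_def
      using pab pa0 p by auto
    have "p \<in> closure (Rreg G r)" unfolding closure_approachable
    proof (intro allI impI)
      fix d :: real assume d: "d > 0"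
      define y where "y = (pa, max v1 (pb - d/2))"
      have "y \<in> Rreg G r" using inR[of y] pab pbv1 d p unfolding y_def Krect_def causal_le_def by auto
      moreover have "dist y p < d" unfolding y_def p using d pbv1
        by (simp add: dist_Pair_Pair dist_real_def)
      ultimately show "\<exists>y\<in>Rreg G r. dist y p < d" by blast
    qed
    moreover have "q \<in> closure (Rreg G r)" using inR[OF qK] closure_subset by blast
    moreover have "q \<in> Iminus K {p}" using qK KK pa0 pbv1 p unfolding Iminus_def chron_lt_def q_def by auto
    moreover have "(Jminus K {p} \<inter> Jplus K {q}) - {p} \<subseteq> Rreg G r \<union> Areg G r"
    proof
      fix x assume x: "x \<in> (Jminus K {p} \<inter> Jplus K {q}) - {p}"
      then have "x \<in> Krect u1 v1" "causal_le x p" "x \<noteq> p"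
        using pab p unfolding Jminus_def Jplus_def causal_le_def q_def K_def Krect_def by auto
      then show "x \<in> Rreg G r \<union> Areg G r" using inR by blast
    qed
    moreover have "p \<in> Krect u0 v0" "q \<in> Krect u0 v0" using KK pK qK unfolding K_def by auto
    ultimately have "p \<in> Rreg G r \<union> Areg G r" using VII[rule_format, of p q] unfolding K_def by blast
    then show False using pK unfolding Rreg_def Areg_def by auto
  qed
  have sub: "Krect u1 v1 \<subseteq> Wreg G v0 r \<delta> \<inter> Rreg G r"
  proof
    fix x assume x: "x \<in> Krect u1 v1"
    obtain a b where xab: "x = (a,b)" by (cases x)
    have xG: "x \<in> G" using rect x by auto
    show "x \<in> Wreg G v0 r \<delta> \<inter> Rreg G r"
      using key[of a b] xG xab x puneg[OF xG] unfolding Krect_def Wreg_def Rreg_def rp_def by auto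
  qed
  show ?thesis using u1 v1(1) sub by blast
qed

end
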